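(* Let $q=2^t$. Let $r+I\in\ker\pi_{P_1}\cap C_k(P,L)$, let $r^*\in R_P^*$ be its representative, and write $r^*=(1+x_3^{q-1})h$ with $h\in R_P^*$ not involving $x_3$. Then $h$ is a $k$-linear combination of the constant $1$ and the $q$ monomials $g_0g_1^2g_2^4\cdots g_{t-1}^{2^{t-1}}$ with each $g_i\in\{x_1,x_2\}$.
   Context: Let $k=\mathbb{F}_q$, $q=2^t$, $V=k^4$ with coordinates $x_0,\dots,x_3$ relative to a symplectic basis $e_0,\dots,e_3$ of a nonsingular alternating form with $(e_0,e_3)=(e_1,e_2)=1$; $P$ the points (1-dim subspaces) and $L$ the totally isotropic 2-dim subspaces (lines). $R=k[x_0,\dots,x_3]$, $I=(x_i^q-x_i)_{i}$. $R_P^*$ is the $k$-span of monomials $x_0^{m_0}\cdots x_3^{m_3}$ with $0\le m_i\le q-1$ and $\sum m_i$ divisible by $q-1$; $R_P=\{f+I:f\in R_P^*\}$, identified with functions $P\to k$ by evaluation at nonzero vectors. For a line $\ell$, $\delta_\ell^*\in R_P^*$ is the polynomial representing the characteristic function of $\ell$, and $C_k(P,L)$ is the $k$-span of $\{\delta_\ell^*+I:\ell\in L\}$. $P_1$ is the set of points with $x_3$-coordinate nonzero and $\pi_{P_1}$ is restriction of functions to $P_1$. *)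

theory Defs
  imports Main
begin

text \<open>Vectors of V = k^4 are functions nat => k vanishing outside {0..3};
  monomials x0^m0...x3^m3 are exponent functions m :: nat => nat vanishing outside {0..3};
  a polynomial is its coefficient function (monomial => k).\<close>

definition Vec :: "(nat \<Rightarrow> 'k::field) set" where
  "Vec = {v. \<forall>i\<ge>4. v i = 0}"

definition Mon :: "nat \<Rightarrow> (nat \<Rightarrow> nat) set" where
  "Mon q = {m. (\<forall>i<4. m i < q) \<and> (\<forall>i\<ge>4. m i = 0)}"

text \<open>reduced polynomials: all exponents at most q-1 (unique representatives of R/I)\<close>
definition reduced :: "nat \<Rightarrow> ((nat \<Rightarrow> nat) \<Rightarrow> 'k::field) \<Rightarrow> bool" where
  "reduced q c \<longleftrightarrow> (\<forall>m. c m \<noteq> 0 \<longrightarrow> m \<in> Mon q)"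

definition RPstar :: "nat \<Rightarrow> ((nat \<Rightarrow> nat) \<Rightarrow> 'k::field) set" where
  "RPstar q = {c. reduced q c \<and> (\<forall>m. c m \<noteq> 0 \<longrightarrow> (q - 1) dvd (\<Sum>i<4. m i))}"

definition evalp :: "nat \<Rightarrow> ((nat \<Rightarrow> nat) \<Rightarrow> 'k::field) \<Rightarrow> (nat \<Rightarrow> 'k) \<Rightarrow> 'k" where
  "evalp q c v = (\<Sum>m\<in>Mon q. c m * (\<Prod>i<4. v i ^ m i))"

definition bform :: "(nat \<Rightarrow> 'k::field) \<Rightarrow> (nat \<Rightarrow> 'k) \<Rightarrow> 'k" where
  "bform u w = u 0 * w 3 - u 3 * w 0 + u 1 * w 2 - u 2 * w 1"

definition span2 :: "(nat \<Rightarrow> 'k::field) \<Rightarrow> (nat \<Rightarrow> 'k) \<Rightarrow> (nat \<Rightarrow> 'k) set" where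
  "span2 u w = {(\<lambda>i. a * u i + b * w i) | a b. True}"

text \<open>L: totally isotropic 2-dimensional subspaces\<close>
definition Lines :: "(nat \<Rightarrow> 'k::field) set set" where
  "Lines = {span2 u w | u w. u \<in> Vec \<and> w \<in> Vec \<and> u \<noteq> (\<lambda>i. 0)
             \<and> (\<forall>c. w \<noteq> (\<lambda>i. c * u i)) \<and> bform u w = 0}"

definition deltastar :: "nat \<Rightarrow> (nat \<Rightarrow> 'k::field) set \<Rightarrow> ((nat \<Rightarrow> nat) \<Rightarrow> 'k)" where
  "deltastar q l = (THE c. reduced q c \<and>
      (\<forall>v\<in>Vec. evalp q c v = (if v \<in> l then 1 else 0)))"

text \<open>coefficients of the product (1 + x3^(q-1)) * h in R\<close>
definition mult_x3 :: "nat \<Rightarrow> ((nat \<Rightarrow> nat) \<Rightarrow> 'k::field) \<Rightarrow> ((nat \<Rightarrow> nat) \<Rightarrow> 'k)" where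
  "mult_x3 q h = (\<lambda>m. h m + (if q - 1 \<le> m 3 then h (m(3 := m 3 - (q - 1))) else 0))"

text \<open>exponent vector of g_0 g_1^2 ... g_{t-1}^(2^(t-1)), where g i \<in> {1,2} means g_i = x_(g i)\<close>
definition gmon :: "nat \<Rightarrow> (nat \<Rightarrow> nat) \<Rightarrow> (nat \<Rightarrow> nat)" where
  "gmon t g = (\<lambda>j. \<Sum>i<t. if g i = j then 2 ^ i else 0)"

definition gmons :: "nat \<Rightarrow> (nat \<Rightarrow> nat) set" where
  "gmons t = {gmon t g | g. \<forall>i<t. g i \<in> {1, 2}}"

end

theory Submission
  imports Defs "HOL-Computational_Algebra.Polynomial" "HOL-Library.FuncSet"
begin


locale ff =
  fixes q t :: nat and kk :: "'k::field itself"
  assumes finK: "finite (UNIV :: 'k::field set)"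
    and cardK: "card (UNIV :: 'k set) = q" and qt: "q = 2 ^ t"

begin

lemma q_ge2: "q \<ge> 2"
proof -
  have "card {0::'k, 1} \<le> card (UNIV :: 'k set)" by (rule card_mono[OF finK]) auto
  thus ?thesis using cardK by simp
qed

lemma t_pos: "t > 0"
  using q_ge2 qt by (cases t) auto

lemma pow_q1: "(x::'k) \<noteq> 0 \<Longrightarrow> x ^ (q - 1) = 1"
proof -
  assume x: "x \<noteq> 0"
  let ?U = "UNIV - {0::'k}"
  have fin: "finite ?U" using finK by simp
  have bij: "bij_betw (\<lambda>y. x * y) ?U ?U"
  proof (rule bij_betw_byWitness[where f'="\<lambda>y. y / x"])
  qed (use x in auto)
  have "(\<Prod>y\<in>?U. x * y) = (\<Prod>y\<in>?U. y)"
    using prod.reindex_bij_betw[OF bij, of "\<lambda>y. y"] by simp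
  moreover have "(\<Prod>y\<in>?U. x * y) = x ^ card ?U * (\<Prod>y\<in>?U. y)"
    by (simp add: prod.distrib)
  moreover have "(\<Prod>y\<in>?U. y) \<noteq> 0" using fin by (simp add: prod_zero_iff)
  moreover have "card ?U = q - 1" using cardK finK by (simp add: card_Diff_singleton)
  ultimately show ?thesis by simp
qed

lemma two_zero: "(2::'k) = 0"
proof -
  have "odd (q - 1)" using qt t_pos q_ge2 by (cases t) auto
  hence "(-1::'k) ^ (q - 1) = -1" by simp
  moreover have "(-1::'k) ^ (q - 1) = 1" by (rule pow_q1) simp
  ultimately have h: "(-1::'k) = 1" by simp
  have "(2::'k) = 1 - (-1)" by simp
  also have "\<dots> = 0" using h by simp
  finally show ?thesis .
qed

lemma add_self: "(x::'k) + x = 0"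
proof -
  have "x + x = 2 * x" by simp
  thus ?thesis using two_zero by simp
qed

lemma neg_eq: "- (x::'k) = x"
  using add_self by (rule minus_unique)

lemma minus_eq_plus: "(x::'k) - y = x + y"
  using neg_eq by (metis diff_conv_add_uminus)

lemma ofnat_q: "(of_nat q :: 'k) = 0"
  using qt t_pos two_zero by (cases t) auto

lemma exists_nonroot:
  assumes "0 < r" "r < q - 1"
  shows "\<exists>a::'k. a \<noteq> 0 \<and> a ^ r \<noteq> 1"
proof (rule ccontr)
  assume "\<not> ?thesis"
  hence all: "\<And>a::'k. a \<noteq> 0 \<Longrightarrow> a ^ r = 1" by blast
  define p :: "'k poly" where "p = [:-1:] + monom 1 r"
  have deg: "degree p = r" unfolding p_def using assms
    by (subst degree_add_eq_right) (auto simp: degree_monom_eq)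
  have "p \<noteq> 0" using deg assms by auto
  hence le: "card {x. poly p x = 0} \<le> r" using card_poly_roots_bound deg by metis
  have "UNIV - {0::'k} \<subseteq> {x. poly p x = 0}"
    using all by (auto simp: p_def poly_monom)
  hence "card (UNIV - {0::'k}) \<le> card {x. poly p x = 0}"
    by (intro card_mono) (auto intro: poly_roots_finite simp: \<open>p \<noteq> 0\<close>)
  moreover have "card (UNIV - {0::'k}) = q - 1" using cardK finK by (simp add: card_Diff_singleton)
  ultimately show False using le assms by linarith
qed

lemma powsum:
  "(\<Sum>x\<in>UNIV. (x::'k) ^ e) = (if 0 < e \<and> (q - 1) dvd e then 1 else 0)"
proof (cases "e = 0")
  case True
  thus ?thesis using ofnat_q cardK by simp
next
  case False
  let ?U = "UNIV - {0::'k}"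
  have split: "(\<Sum>x\<in>UNIV. (x::'k) ^ e) = (\<Sum>x\<in>?U. x ^ e)"
  proof -
    have "(\<Sum>x\<in>UNIV. (x::'k) ^ e) = (\<Sum>x\<in>insert 0 ?U. x ^ e)" by (simp add: insert_absorb)
    also have "\<dots> = 0 ^ e + (\<Sum>x\<in>?U. x ^ e)" using finK by (subst sum.insert) auto
    finally show ?thesis using False by simp
  qed
  show ?thesis
  proof (cases "(q - 1) dvd e")
    case True
    then obtain c where c: "e = (q - 1) * c" by blast
    have "(\<Sum>x\<in>?U. x ^ e) = (\<Sum>x\<in>?U. 1)"
      by (rule sum.cong) (auto simp: c power_mult pow_q1[simplified])
    also have "\<dots> = of_nat (q - 1)" using cardK finK by (simp add: card_Diff_singleton)
    also have "\<dots> = (1::'k)" using q_ge2 ofnat_q neg_eq two_zero by (simp add: of_nat_diff)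
    finally show ?thesis using split True False by simp
  next
    case nd: False
    define r where "r = e mod (q - 1)"
    have r: "0 < r" "r < q - 1" using nd q_ge2 unfolding r_def
      by (auto simp: mod_eq_0_iff_dvd[symmetric])
    obtain a :: 'k where a: "a \<noteq> 0" "a ^ r \<noteq> 1" using exists_nonroot[OF r] by blast
    have ae: "a ^ e = a ^ r"
    proof -
      have "e = (q - 1) * (e div (q - 1)) + r" unfolding r_def by simp
      hence "a ^ e = (a ^ (q - 1)) ^ (e div (q - 1)) * a ^ r"
        by (metis power_add power_mult)
      thus ?thesis using pow_q1[OF a(1)] by simp
    qed
    let ?S = "(\<Sum>x\<in>UNIV. (x::'k) ^ e)"
    have bij: "bij_betw (\<lambda>x. a * x) UNIV UNIV"
      by (rule bij_betw_byWitness[where f'="\<lambda>y. y / a"]) (use a in auto)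
    have "?S = (\<Sum>x\<in>UNIV. (a * x) ^ e)"
      using sum.reindex_bij_betw[OF bij, of "\<lambda>x. x ^ e"] by simp
    also have "\<dots> = a ^ e * ?S" by (simp add: power_mult_distrib sum_distrib_left)
    finally have "(1 - a ^ e) * ?S = 0" by (simp add: algebra_simps)
    hence "?S = 0" using a ae by simp
    thus ?thesis using nd by simp
  qed
qed

end


lemma funset_card:
  assumes "finite A" "finite B"
  shows "finite {f. (\<forall>x\<in>A. f x \<in> B) \<and> (\<forall>x. x \<notin> A \<longrightarrow> f x = d)}
     \<and> card {f. (\<forall>x\<in>A. f x \<in> B) \<and> (\<forall>x. x \<notin> A \<longrightarrow> f x = d)} = card B ^ card A"
proof -
  let ?S = "{f. (\<forall>x\<in>A. f x \<in> B) \<and> (\<forall>x. x \<notin> A \<longrightarrow> f x = d)}"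
  have bij: "bij_betw (\<lambda>f. restrict f A) ?S (PiE A (\<lambda>_. B))"
    unfolding bij_betw_def
  proof
    show "inj_on (\<lambda>f. restrict f A) ?S"
    proof (rule inj_onI)
      fix f g assume "f \<in> ?S" "g \<in> ?S" and eq0: "restrict f A = restrict g A"
      show "f = g"
      proof (rule ext)
        fix x
        have "restrict f A x = restrict g A x" using eq0 by simp
        thus "f x = g x"
          using \<open>f \<in> ?S\<close> \<open>g \<in> ?S\<close>
          by (cases "x \<in> A") auto
      qed
    qed
    show "(\<lambda>f. restrict f A) ` ?S = PiE A (\<lambda>_. B)"
    proof
      show "(\<lambda>f. restrict f A) ` ?S \<subseteq> PiE A (\<lambda>_. B)"
      proof clarify
        fix f assume "\<forall>x\<in>A. f x \<in> B" "\<forall>x. x \<notin> A \<longrightarrow> f x = d"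
        thus "restrict f A \<in> PiE A (\<lambda>_. B)" by (simp add: restrict_PiE_iff)
      qed
      show "PiE A (\<lambda>_. B) \<subseteq> (\<lambda>f. restrict f A) ` ?S"
      proof
        fix g assume g: "g \<in> PiE A (\<lambda>_. B)"
        have "g = restrict (\<lambda>x. if x \<in> A then g x else d) A"
        proof
          fix x show "g x = restrict (\<lambda>x. if x \<in> A then g x else d) A x"
          proof (cases "x \<in> A")
            case False thus ?thesis using PiE_arb[OF g False] by simp
          qed simp
        qed
        moreover have "\<forall>x\<in>A. g x \<in> B" using g by (simp add: PiE_iff)
        hence "(\<lambda>x. if x \<in> A then g x else d) \<in> ?S" by simp
        ultimately show "g \<in> (\<lambda>f. restrict f A) ` ?S" by blast
      qed
    qed
  qed
  have fin: "finite (PiE A (\<lambda>_. B))" using assms by (simp add: finite_PiE)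
  have "card (PiE A (\<lambda>_. B)) = card B ^ card A" using assms by (simp add: card_PiE)
  moreover have "finite ?S" using bij_betw_finite[OF bij] fin by simp
  moreover have "card ?S = card (PiE A (\<lambda>_. B))" using bij_betw_same_card[OF bij] .
  ultimately show ?thesis by simp
qed

definition vec4 :: "'k \<Rightarrow> 'k \<Rightarrow> 'k \<Rightarrow> 'k \<Rightarrow> nat \<Rightarrow> 'k::field" where
  "vec4 a b c d = (\<lambda>i. if i = 0 then a else if i = 1 then b else if i = 2 then c else if i = 3 then d else 0)"

lemma vec4_simps[simp]: "vec4 a b c d 0 = a" "vec4 a b c d 1 = b" "vec4 a b c d 2 = c"
  "vec4 a b c d 3 = d" "vec4 a b c d (Suc (Suc (Suc (Suc i)))) = 0"
  "vec4 a b c d (Suc 0) = b" "vec4 a b c d (Suc (Suc 0)) = c" "vec4 a b c d (Suc (Suc (Suc 0))) = d"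
  by (simp_all add: vec4_def)

lemma vec4_Vec[simp]: "vec4 a b c d \<in> Vec"
  by (auto simp: Vec_def vec4_def)

lemma Vec_vec4: "v \<in> Vec \<Longrightarrow> v = vec4 (v 0) (v 1) (v 2) (v 3)"
  by (auto simp: Vec_def vec4_def fun_eq_iff)

lemma vec4_eq_iff: "vec4 a b c d = vec4 a' b' c' d' \<longleftrightarrow> a = a' \<and> b = b' \<and> c = c' \<and> d = d'"
proof
  assume h: "vec4 a b c d = vec4 a' b' c' d'"
  show "a = a' \<and> b = b' \<and> c = c' \<and> d = d'"
    using fun_cong[OF h, of 0] fun_cong[OF h, of 1] fun_cong[OF h, of 2] fun_cong[OF h, of 3] by simp
qed simp

lemma sum_prod2: "sum G (A \<times> B) = (\<Sum>a\<in>A. \<Sum>b\<in>B. G (a, b))"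
  using sum.cartesian_product[of "\<lambda>a b. G (a, b)" B A] by simp

lemma sum_UNIV4:
  "(\<Sum>x\<in>(UNIV :: ('a \<times> 'a \<times> 'a \<times> 'a) set). G x)
   = (\<Sum>a\<in>UNIV. \<Sum>b\<in>UNIV. \<Sum>c\<in>UNIV. \<Sum>d\<in>UNIV. G (a, b, c, d))"
proof -
  have u: "(UNIV :: ('a \<times> 'a \<times> 'a \<times> 'a) set) = UNIV \<times> (UNIV \<times> (UNIV \<times> UNIV))" by simp
  show ?thesis unfolding u sum_prod2 ..
qed

lemma sum_Vec:
  fixes f :: "(nat \<Rightarrow> 'k::field) \<Rightarrow> 'b::comm_monoid_add"
  assumes "finite (UNIV :: 'k set)"
  shows "(\<Sum>v\<in>Vec. f v) = (\<Sum>a\<in>UNIV. \<Sum>b\<in>UNIV. \<Sum>c\<in>UNIV. \<Sum>d\<in>UNIV. f (vec4 a b c d))"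
proof -
  let ?g = "\<lambda>(a,b,c,d). vec4 a b c (d::'k)"
  have img: "Vec = ?g ` UNIV"
  proof
    show "Vec \<subseteq> ?g ` UNIV"
    proof
      fix v assume "v \<in> (Vec :: (nat \<Rightarrow> 'k) set)"
      hence "v = ?g (v 0, v 1, v 2, v 3)" using Vec_vec4 by auto
      thus "v \<in> ?g ` UNIV" by blast
    qed
  qed auto
  have inj: "inj ?g" by (auto simp: inj_def vec4_eq_iff)
  have "(\<Sum>v\<in>Vec. f v) = (\<Sum>x\<in>UNIV. f (?g x))"
    unfolding img by (subst sum.reindex[OF inj]) (simp add: comp_def)
  also have "\<dots> = (\<Sum>a\<in>UNIV. \<Sum>b\<in>UNIV. \<Sum>c\<in>UNIV. \<Sum>d\<in>UNIV. f (vec4 a b c d))"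
    by (simp only: sum_UNIV4) simp
  finally show ?thesis .
qed


definition monv :: "(nat \<Rightarrow> nat) \<Rightarrow> (nat \<Rightarrow> 'k::field) \<Rightarrow> 'k" where
  "monv m v = (\<Prod>i<4. v i ^ m i)"

lemma evalp_monv: "evalp q c v = (\<Sum>m\<in>Mon q. c m * monv m v)"
  by (simp add: evalp_def monv_def)

lemma Vec_eq: "Vec = {f. (\<forall>x\<in>{..<4}. f x \<in> UNIV) \<and> (\<forall>x. x \<notin> {..<4} \<longrightarrow> f x = 0)}"
  by (auto simp: Vec_def not_less)

lemma Mon_eq: "Mon q = {f. (\<forall>x\<in>{..<4}. f x \<in> {..<q}) \<and> (\<forall>x. x \<notin> {..<4} \<longrightarrow> f x = 0)}"
  by (auto simp: Mon_def not_less)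

lemma finite_Mon: "finite (Mon q)" and card_Mon: "card (Mon q) = q ^ 4"
  using funset_card[of "{..<4::nat}" "{..<q}" 0] unfolding Mon_eq[symmetric] by auto

context ff begin

lemma finite_Vec: "finite (Vec :: (nat \<Rightarrow> 'k) set)" and card_Vec: "card (Vec :: (nat \<Rightarrow> 'k) set) = q ^ 4"
  using funset_card[of "{..<4::nat}" "UNIV :: 'k set" 0] finK cardK unfolding Vec_eq[symmetric] by auto

definition ps :: "nat \<Rightarrow> 'k" where "ps e = (if 0 < e \<and> (q - 1) dvd e then 1 else 0)"

lemma powsum': "(\<Sum>x\<in>UNIV. (x::'k) ^ e) = ps e"
  unfolding ps_def by (rule powsum)

lemma sum_Vec_prod:
  "(\<Sum>v\<in>(Vec :: (nat \<Rightarrow> 'k) set). \<Prod>i<4. v i ^ e i) = (\<Prod>i<4. ps (e i))"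
proof -
  have "(\<Sum>v\<in>(Vec :: (nat \<Rightarrow> 'k) set). \<Prod>i<4. v i ^ e i) =
     (\<Sum>a\<in>UNIV. \<Sum>b\<in>UNIV. \<Sum>c\<in>UNIV. \<Sum>d\<in>UNIV. a ^ e 0 * (b ^ e 1 * (c ^ e 2 * (d ^ e 3 :: 'k))))"
    by (subst sum_Vec[OF finK]) (simp add: eval_nat_numeral prod.lessThan_Suc mult_ac vec4_def)
  also have "\<dots> = (\<Sum>a\<in>UNIV. a ^ e 0) * ((\<Sum>b\<in>UNIV. b ^ e 1) * ((\<Sum>c\<in>UNIV. c ^ e 2) * (\<Sum>d\<in>UNIV. (d::'k) ^ e 3)))"
    by (simp only: sum_distrib_left[symmetric] sum_distrib_right[symmetric])
  also have "\<dots> = (\<Prod>i<4. ps (e i))"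
    by (simp add: powsum' eval_nat_numeral prod.lessThan_Suc mult_ac)
  finally show ?thesis .
qed

lemma ps_small:
  assumes "e \<le> 2 * (q - 1)"
  shows "ps e = (if e = q - 1 \<or> e = 2 * (q - 1) then 1 else 0)"
proof -
  have "(0 < e \<and> (q - 1) dvd e) \<longleftrightarrow> (e = q - 1 \<or> e = 2 * (q - 1))"
  proof
    assume "0 < e \<and> (q - 1) dvd e"
    then obtain k where k: "e = (q - 1) * k" "0 < k" by auto
    have "(q - 1) * k \<le> (q - 1) * 2" using assms k by (simp add: mult.commute)
    hence "k \<le> 2" using q_ge2 by simp
    hence "k = 1 \<or> k = 2" using k by auto
    thus "e = q - 1 \<or> e = 2 * (q - 1)" using k by auto
  next
    assume "e = q - 1 \<or> e = 2 * (q - 1)"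
    thus "0 < e \<and> (q - 1) dvd e" using q_ge2 by auto
  qed
  thus ?thesis unfolding ps_def by simp
qed

end


context ff begin

lemma sum_monv_evalp:
  "(\<Sum>v\<in>(Vec :: (nat \<Rightarrow> 'k) set). monv m' v * evalp q c v) = (\<Sum>m\<in>Mon q. c m * (\<Prod>i<4. ps (m' i + m i)))"
proof -
  have "(\<Sum>v\<in>(Vec :: (nat \<Rightarrow> 'k) set). monv m' v * evalp q c v)
      = (\<Sum>v\<in>(Vec :: (nat \<Rightarrow> 'k) set). \<Sum>m\<in>Mon q. c m * (\<Prod>i<4. v i ^ (m' i + m i)))"
    by (simp add: evalp_monv sum_distrib_left monv_def prod.distrib[symmetric] power_add mult_ac)
  also have "\<dots> = (\<Sum>m\<in>Mon q. c m * (\<Sum>v\<in>(Vec :: (nat \<Rightarrow> 'k) set). (\<Prod>i<4. v i ^ (m' i + m i))))"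
    by (subst sum.swap) (simp add: sum_distrib_left)
  also have "\<dots> = (\<Sum>m\<in>Mon q. c m * (\<Prod>i<4. ps (m' i + m i)))"
    by (simp add: sum_Vec_prod)
  finally show ?thesis .
qed

lemma unique0:
  fixes c :: "(nat \<Rightarrow> nat) \<Rightarrow> 'k"
  assumes red: "reduced q c" and z: "\<forall>v\<in>Vec. evalp q c v = 0"
  shows "c m0 = 0"
proof (induction m0 rule: measure_induct_rule[of "\<lambda>m::nat\<Rightarrow>nat. 4 * (q - 1) - sum m {..<4}"])
  case (less m0)
  show ?case
  proof (cases "m0 \<in> Mon q")
    case False thus ?thesis using red by (auto simp: reduced_def)
  next
    case m0: True
    define m' where "m' = (\<lambda>i. (q - 1) - m0 i)"
    let ?W = "\<lambda>m. (\<Prod>i<4. ps (m' i + m i) :: 'k)"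
    have bnd: "\<And>m i. m \<in> Mon q \<Longrightarrow> i < 4 \<Longrightarrow> m i \<le> q - 1" by (auto simp: Mon_def less_Suc_eq_le[symmetric])
    have psi: "\<And>(m::nat\<Rightarrow>nat) (i::nat). m \<in> Mon q \<Longrightarrow> i < 4 \<Longrightarrow>
        ps (m' i + m i) = (if m i = m0 i \<or> (m i = q - 1 \<and> m0 i = 0) then 1 else 0)"
    proof -
      fix m :: "nat \<Rightarrow> nat" and i :: nat assume m: "m \<in> Mon q" and i: "i < 4"
      have a: "m i \<le> q - 1" "m0 i \<le> q - 1" using bnd m m0 i by auto
      have b: "m' i + m i \<le> 2 * (q - 1)" using a unfolding m'_def by auto
      have c: "(m' i + m i = q - 1 \<or> m' i + m i = 2 * (q - 1)) \<longleftrightarrow> (m i = m0 i \<or> (m i = q - 1 \<and> m0 i = 0))"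
        using a q_ge2 unfolding m'_def by arith
      show "ps (m' i + m i) = (if m i = m0 i \<or> (m i = q - 1 \<and> m0 i = 0) then 1 else 0)"
        using ps_small[OF b] c by simp
    qed
    have W0: "?W m0 = 1" using psi[OF m0] by simp
    have Wm: "?W m = 0 \<or> c m = 0" if m: "m \<in> Mon q" "m \<noteq> m0" for m
    proof (cases "\<forall>i<4. m i = m0 i \<or> (m i = q - 1 \<and> m0 i = 0)")
      case False
      then obtain i where "i < 4" "\<not> (m i = m0 i \<or> (m i = q - 1 \<and> m0 i = 0))" by blast
      hence "ps (m' i + m i) = 0" using psi[OF m(1)] by simp
      hence "?W m = 0" using \<open>i < 4\<close> by (intro prod_zero) auto
      thus ?thesis ..
    next
      case True
      obtain j where j: "j < 4" "m j \<noteq> m0 j"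
        using m m0 by (auto simp: Mon_def fun_eq_iff) (metis not_le)
      have le: "\<And>i. i < 4 \<Longrightarrow> m0 i \<le> m i" using True by fastforce
      have "m0 j < m j" using True j q_ge2 by force
      have "(\<Sum>i<4. m0 i) < (\<Sum>i<4. m i)"
        by (rule sum_strict_mono_ex1) (use le j \<open>m0 j < m j\<close> in auto)
      moreover have "(\<Sum>i<4. m i) \<le> (\<Sum>i<(4::nat). q - 1)"
        by (rule sum_mono) (use bnd m in auto)
      ultimately have "4 * (q - 1) - (\<Sum>i<4. m i) < 4 * (q - 1) - (\<Sum>i<4. m0 i)" by simp
      hence "c m = 0" by (rule less.IH)
      thus ?thesis ..
    qed
    have "0 = (\<Sum>v\<in>(Vec :: (nat \<Rightarrow> 'k) set). monv m' v * evalp q c v)" using z by simp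
    also have "\<dots> = (\<Sum>m\<in>Mon q. c m * ?W m)" by (rule sum_monv_evalp)
    also have "\<dots> = c m0 * ?W m0 + (\<Sum>m\<in>Mon q - {m0}. c m * ?W m)"
      using finite_Mon m0 by (subst sum.remove) auto
    also have "(\<Sum>m\<in>Mon q - {m0}. c m * ?W m) = 0"
      by (rule sum.neutral) (use Wm in auto)
    finally show ?thesis using W0 by simp
  qed
qed

end


lemma evalp_diff: "evalp q (\<lambda>m. c1 m - c2 m) v = evalp q c1 v - evalp q c2 v"
  by (simp add: evalp_def sum_subtractf left_diff_distrib)

lemma reduced_diff: "reduced q c1 \<Longrightarrow> reduced q c2 \<Longrightarrow> reduced q (\<lambda>m. c1 m - c2 m)"
  by (auto simp: reduced_def) (metis diff_self)

context ff begin

lemma rep_unique: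
  fixes c1 c2 :: "(nat \<Rightarrow> nat) \<Rightarrow> 'k"
  assumes "reduced q c1" "reduced q c2" "\<forall>v\<in>Vec. evalp q c1 v = evalp q c2 v"
  shows "c1 = c2"
proof
  fix m
  have r: "reduced q (\<lambda>m. c1 m - c2 m)" using reduced_diff assms(1,2) .
  have z: "\<forall>v\<in>Vec. evalp q (\<lambda>m. c1 m - c2 m) v = 0" using assms(3) by (simp add: evalp_diff)
  have "(\<lambda>m. c1 m - c2 m) m = 0" using unique0[OF r z] .
  thus "c1 m = c2 m" by simp
qed

lemma rep_exists:
  fixes f :: "(nat \<Rightarrow> 'k) \<Rightarrow> 'k"
  shows "\<exists>c. reduced q c \<and> (\<forall>v\<in>Vec. evalp q c v = f v)"
proof -
  define RR where "RR = {c :: (nat \<Rightarrow> nat) \<Rightarrow> 'k. (\<forall>x\<in>Mon q. c x \<in> UNIV) \<and> (\<forall>x. x \<notin> Mon q \<longrightarrow> c x = 0)}"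
  define FF where "FF = {g :: (nat \<Rightarrow> 'k) \<Rightarrow> 'k. (\<forall>x\<in>Vec. g x \<in> UNIV) \<and> (\<forall>x. x \<notin> Vec \<longrightarrow> g x = 0)}"
  define E where "E = (\<lambda>c v. if v \<in> Vec then evalp q c v else (0::'k))"
  have RR0: "finite RR \<and> card RR = q ^ (q ^ 4)"
    using funset_card[of "Mon q" "UNIV::'k set" 0, OF finite_Mon finK] unfolding RR_def cardK card_Mon .
  have FF0: "finite FF \<and> card FF = q ^ (q ^ 4)"
    using funset_card[of "Vec::(nat \<Rightarrow> 'k) set" "UNIV::'k set" 0, OF finite_Vec finK] unfolding FF_def cardK card_Vec .
  have RR: "finite RR" "card RR = q ^ (q ^ 4)" using RR0 by auto
  have FF: "finite FF" "card FF = q ^ (q ^ 4)" using FF0 by auto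
  have redRR: "reduced q c \<longleftrightarrow> c \<in> RR" for c by (auto simp: reduced_def RR_def)
  have inj: "inj_on E RR"
  proof (rule inj_onI)
    fix c1 c2 assume c: "c1 \<in> RR" "c2 \<in> RR" "E c1 = E c2"
    have "\<forall>v\<in>Vec. evalp q c1 v = evalp q c2 v"
    proof
      fix v :: "nat \<Rightarrow> 'k" assume "v \<in> Vec"
      thus "evalp q c1 v = evalp q c2 v" using fun_cong[OF c(3), of v] unfolding E_def by simp
    qed
    thus "c1 = c2" using c redRR rep_unique by blast
  qed
  have sub: "E ` RR \<subseteq> FF" by (auto simp: E_def FF_def)
  have "card (E ` RR) = card FF" using card_image[OF inj] RR FF by simp
  hence eq: "E ` RR = FF" using card_subset_eq[OF FF(1) sub] by simp
  have "(\<lambda>v. if v \<in> Vec then f v else 0) \<in> FF" by (auto simp: FF_def)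
  then obtain c where "c \<in> RR" "E c = (\<lambda>v. if v \<in> Vec then f v else 0)"
    unfolding eq[symmetric] by auto
  thus ?thesis using redRR unfolding E_def by (metis (full_types))
qed

lemma deltastar_prop:
  "reduced q (deltastar q l :: (nat \<Rightarrow> nat) \<Rightarrow> 'k) \<and>
   (\<forall>v\<in>Vec. evalp q (deltastar q l) v = (if v \<in> l then (1::'k) else 0))"
proof -
  let ?P = "\<lambda>c :: (nat \<Rightarrow> nat) \<Rightarrow> 'k. reduced q c \<and> (\<forall>v\<in>Vec. evalp q c v = (if v \<in> l then 1 else 0))"
  have "\<exists>!c. ?P c"
  proof -
    obtain c where "?P c" using rep_exists[of "\<lambda>v. if v \<in> l then 1 else 0"] by blast
    moreover have "\<And>c'. ?P c' \<Longrightarrow> c' = c" using \<open>?P c\<close> rep_unique by (metis (no_types, lifting))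
    ultimately show ?thesis by blast
  qed
  hence "?P (THE c. ?P c)" by (rule theI')
  thus ?thesis unfolding deltastar_def .
qed

end


lemma even_invol:
  assumes "finite S" "\<forall>x\<in>S. f x \<in> S \<and> f (f x) = x \<and> f x \<noteq> x"
  shows "even (card S)"
  using assms
proof (induction "card S" arbitrary: S rule: less_induct)
  case less
  show ?case
  proof (cases "S = {}")
    case True thus ?thesis by simp
  next
    case False
    then obtain x where x: "x \<in> S" by blast
    let ?S' = "S - {x, f x}"
    have fx: "f x \<in> S" "f x \<noteq> x" using less.prems x by auto
    have card: "card S = card ?S' + 2"
    proof -
      have "{x, f x} \<subseteq> S" using x fx by auto
      moreover have "card {x, f x} = 2" using fx by auto
      ultimately show ?thesis using less.prems(1) card_Diff_subset[of "{x, f x}" S] card_mono[of S "{x, f x}"]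
        by (simp add: finite_subset)
    qed
    have "even (card ?S')"
    proof (rule less.hyps)
      show "card ?S' < card S" using card by simp
      show "finite ?S'" using less.prems by simp
      show "\<forall>y\<in>?S'. f y \<in> ?S' \<and> f (f y) = y \<and> f y \<noteq> y"
      proof
        fix y assume y: "y \<in> ?S'"
        have "f y \<in> S" "f (f y) = y" "f y \<noteq> y" using less.prems y by auto
        moreover have "f y \<noteq> x" using y \<open>f (f y) = y\<close> by auto
        moreover have "f y \<noteq> f x" using y less.prems x by (metis DiffD1 DiffD2 insertCI)
        ultimately show "f y \<in> ?S' \<and> f (f y) = y \<and> f y \<noteq> y" by auto
      qed
    qed
    thus ?thesis using card by simp
  qed
qed

context ff begin

lemma even_zero: "even n \<Longrightarrow> (of_nat n :: 'k) = 0"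
  using two_zero by (auto elim!: evenE)

lemma fiber_parity:
  fixes A B :: "'k \<Rightarrow> 'k \<Rightarrow> 'k"
  assumes addA: "\<And>a b a' b'. A (a + a') (b + b') = A a b + A a' b'"
    and addB: "\<And>a b a' b'. B (a + a') (b + b') = B a b + B a' b'"
  shows "(of_nat (card {p. A (fst p) (snd p) = \<alpha>1 \<and> B (fst p) (snd p) = \<beta>1}) :: 'k)
       = of_nat (card {p. A (fst p) (snd p) = \<alpha>2 \<and> B (fst p) (snd p) = \<beta>2})"
proof -
  define \<psi> where "\<psi> = (\<lambda>p. (A (fst p) (snd p), B (fst p) (snd p)))"
  have fin2: "finite (UNIV :: ('k \<times> 'k) set)" by (metis UNIV_Times_UNIV finite_cartesian_product finK)
  have set_eq: "{p. A (fst p) (snd p) = \<alpha> \<and> B (fst p) (snd p) = \<beta>} = {p. \<psi> p = (\<alpha>, \<beta>)}" for \<alpha> \<beta>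
    by (auto simp: \<psi>_def)
  show ?thesis
  proof (cases "inj \<psi>")
    case True
    hence surj: "surj \<psi>" using finite_UNIV_inj_surj[OF fin2] by blast
    have one: "card {p. \<psi> p = z} = 1" for z
    proof -
      obtain p0 where "\<psi> p0 = z" using surj by (metis surjD)
      hence "{p. \<psi> p = z} = {p0}" using True by (auto dest: injD)
      thus ?thesis by simp
    qed
    show ?thesis unfolding set_eq one by simp
  next
    case False
    then obtain x y where xy: "x \<noteq> y" "\<psi> x = \<psi> y" unfolding inj_def by blast
    define d where "d = (fst x + fst y, snd x + snd y)"
    have psi_add: "\<psi> (fst p + fst p', snd p + snd p') = (fst (\<psi> p) + fst (\<psi> p'), snd (\<psi> p) + snd (\<psi> p'))" for p p'
      by (simp add: \<psi>_def addA addB)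
    have xd: "x = (fst y + fst d, snd y + snd d)"
    proof -
      have "fst y + (fst x + fst y) = fst x" "snd y + (snd x + snd y) = snd x"
        by (metis add.commute add.left_commute add_self add_0_right)+
      thus ?thesis by (simp add: d_def prod_eq_iff)
    qed
    have "\<psi> x = (fst (\<psi> y) + fst (\<psi> d), snd (\<psi> y) + snd (\<psi> d))"
      by (subst xd, rule psi_add)
    hence psid: "\<psi> d = (0, 0)" using xy(2) by (cases "\<psi> d") (auto simp: prod_eq_iff)
    have dnz: "d \<noteq> (0, 0)"
    proof
      assume "d = (0, 0)"
      hence "fst x + fst y = 0" "snd x + snd y = 0" by (auto simp: d_def)
      hence "fst x = fst y" "snd x = snd y" using neg_eq by (metis add_eq_0_iff2)+
      thus False using xy(1) by (simp add: prod_eq_iff)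
    qed
    have ev: "even (card {p. \<psi> p = z})" for z
    proof (rule even_invol)
      show "finite {p. \<psi> p = z}" using fin2 by (rule finite_subset[rotated]) simp
      show "\<forall>p\<in>{p. \<psi> p = z}. (\<lambda>p. (fst p + fst d, snd p + snd d)) p \<in> {p. \<psi> p = z} \<and>
        (\<lambda>p. (fst p + fst d, snd p + snd d)) ((\<lambda>p. (fst p + fst d, snd p + snd d)) p) = p \<and>
        (\<lambda>p. (fst p + fst d, snd p + snd d)) p \<noteq> p"
      proof
        fix p assume p: "p \<in> {p. \<psi> p = z}"
        have "\<psi> (fst p + fst d, snd p + snd d) = z" using p psid by (simp add: psi_add)
        moreover have "(fst p + fst d + fst d, snd p + snd d + snd d) = p"
          by (simp add: add.assoc add_self)
        moreover have "(fst p + fst d, snd p + snd d) \<noteq> p" using dnz by (auto simp: prod_eq_iff)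
        ultimately show "(\<lambda>p. (fst p + fst d, snd p + snd d)) p \<in> {p. \<psi> p = z} \<and>
        (\<lambda>p. (fst p + fst d, snd p + snd d)) ((\<lambda>p. (fst p + fst d, snd p + snd d)) p) = p \<and>
        (\<lambda>p. (fst p + fst d, snd p + snd d)) p \<noteq> p" by simp
      qed
    qed
    show ?thesis unfolding set_eq using ev even_zero by simp
  qed
qed

end


definition addf :: "'k \<Rightarrow> 'k \<Rightarrow> 'k \<Rightarrow> 'k \<Rightarrow> 'k \<Rightarrow> 'k \<Rightarrow> 'k \<Rightarrow> (nat \<Rightarrow> 'k) \<Rightarrow> 'k::field" where
  "addf \<kappa> c1 c2 m0 m1 m2 m3 v = \<kappa> * (v 0 * v 3 + v 1 * v 2) + (c1 * v 1 + c2 * v 2)^2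
      + (m0 * v 0 + m1 * v 1 + m2 * v 2 + m3 * v 3)"

lemma polar_id:
  fixes a b a' b' u0 u1 u2 u3 w0 w1 w2 w3 :: "'k::field"
  shows "(a*u0 + b*w0) * (a'*u3 + b'*w3) + (a'*u0 + b'*w0) * (a*u3 + b*w3)
       + (a*u1 + b*w1) * (a'*u2 + b'*w2) + (a'*u1 + b'*w1) * (a*u2 + b*w2)
     = 2 * (a * a' * (u0 * u3 + u1 * u2) + b * b' * (w0 * w3 + w1 * w2) + (a * b' + a' * b) * (u3 * w0 + u2 * w1))
       + (a * b' + a' * b) * (u0 * w3 - u3 * w0 + u1 * w2 - u2 * w1)"
  by (simp add: algebra_simps)

lemma q_split:
  fixes x0 x1 x2 x3 y0 y1 y2 y3 k :: "'k::field"
  shows "k * ((x0 + y0) * (x3 + y3) + (x1 + y1) * (x2 + y2)) = k * (x0 * x3 + x1 * x2) + k * (y0 * y3 + y1 * y2)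
     + k * (x0 * y3 + y0 * x3 + x1 * y2 + y1 * x2)"
  by (simp add: algebra_simps)

lemma sq_split:
  fixes c1 c2 x1 x2 y1 y2 :: "'k::field"
  shows "(c1 * (x1 + y1) + c2 * (x2 + y2))^2 = (c1 * x1 + c2 * x2)^2 + (c1 * y1 + c2 * y2)^2
    + 2 * ((c1 * x1 + c2 * x2) * (c1 * y1 + c2 * y2))"
  by (simp add: algebra_simps power2_eq_square)

lemma lin_split:
  fixes m0 m1 m2 m3 x0 x1 x2 x3 y0 y1 y2 y3 :: "'k::field"
  shows "m0 * (x0 + y0) + m1 * (x1 + y1) + m2 * (x2 + y2) + m3 * (x3 + y3)
   = (m0 * x0 + m1 * x1 + m2 * x2 + m3 * x3) + (m0 * y0 + m1 * y1 + m2 * y2 + m3 * y3)"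
  by (simp add: algebra_simps)

context ff begin

lemma addf_add:
  fixes u w :: "nat \<Rightarrow> 'k"
  assumes bf: "bform u w = 0"
  shows "addf \<kappa> c1 c2 m0 m1 m2 m3 (\<lambda>i. (a + a') * u i + (b + b') * w i)
    = addf \<kappa> c1 c2 m0 m1 m2 m3 (\<lambda>i. a * u i + b * w i) + addf \<kappa> c1 c2 m0 m1 m2 m3 (\<lambda>i. a' * u i + b' * w i)"
proof -
  define X where "X = (\<lambda>i. a * u i + b * w i)"
  define Y where "Y = (\<lambda>i. a' * u i + b' * w i)"
  have XY: "(\<lambda>i. (a + a') * u i + (b + b') * w i) = (\<lambda>i. X i + Y i)"
    by (simp add: X_def Y_def algebra_simps)
  have pol: "X 0 * Y 3 + Y 0 * X 3 + X 1 * Y 2 + Y 1 * X 2 = 0"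
    using polar_id[of a "u 0" b "w 0" a' "u 3" b' "w 3" "u 1" "w 1" "u 2" "w 2"] bf two_zero
    unfolding X_def Y_def bform_def by simp
  have "addf \<kappa> c1 c2 m0 m1 m2 m3 (\<lambda>i. X i + Y i) = addf \<kappa> c1 c2 m0 m1 m2 m3 X + addf \<kappa> c1 c2 m0 m1 m2 m3 Y
     + \<kappa> * (X 0 * Y 3 + Y 0 * X 3 + X 1 * Y 2 + Y 1 * X 2) + 2 * ((c1 * X 1 + c2 * X 2) * (c1 * Y 1 + c2 * Y 2))"
    unfolding addf_def q_split sq_split lin_split by (simp add: algebra_simps)
  thus ?thesis using pol two_zero XY X_def Y_def by simp
qed

end


definition ladd :: "((nat \<Rightarrow> 'k::field) \<Rightarrow> 'k) \<Rightarrow> bool" where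
  "ladd A \<longleftrightarrow> (\<forall>u w a b a' b'. bform u w = 0 \<longrightarrow>
     A (\<lambda>i. (a + a') * u i + (b + b') * w i) = A (\<lambda>i. a * u i + b * w i) + A (\<lambda>i. a' * u i + b' * w i))"

context ff begin

lemma ladd_addf: "ladd (addf \<kappa> c1 c2 m0 m1 m2 m3 :: (nat \<Rightarrow> 'k) \<Rightarrow> 'k)"
  unfolding ladd_def using addf_add by blast

lemma Lines_D:
  assumes "l \<in> (Lines :: (nat \<Rightarrow> 'k) set set)"
  obtains u w where "l = span2 u w" "u \<in> Vec" "w \<in> Vec" "u \<noteq> (\<lambda>i. 0)"
    "\<forall>c. w \<noteq> (\<lambda>i. c * u i)" "bform u w = 0"
  using assms unfolding Lines_def by blast

lemma span2_bij:
  fixes u w :: "nat \<Rightarrow> 'k"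
  assumes u: "u \<noteq> (\<lambda>i. 0)" and w: "\<forall>c. w \<noteq> (\<lambda>i. c * u i)"
  shows "bij_betw (\<lambda>p. (\<lambda>i. fst p * u i + snd p * w i)) UNIV (span2 u w)"
proof -
  have inj: "inj (\<lambda>p. (\<lambda>i. fst p * u i + snd p * w i))"
  proof (rule injI)
    fix p p' :: "'k \<times> 'k"
    assume eq: "(\<lambda>i. fst p * u i + snd p * w i) = (\<lambda>i. fst p' * u i + snd p' * w i)"
    obtain a b a' b' where p: "p = (a, b)" "p' = (a', b')" by (cases p, cases p')
    have e: "\<And>i. (a - a') * u i = (b' - b) * w i"
    proof -
      fix i have "a * u i + b * w i = a' * u i + b' * w i" using fun_cong[OF eq, of i] p by simp
      thus "(a - a') * u i = (b' - b) * w i" by (simp add: algebra_simps)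
    qed
    have "b = b'"
    proof (rule ccontr)
      assume "b \<noteq> b'"
      hence "w = (\<lambda>i. ((a - a') / (b' - b)) * u i)"
        using e by (auto simp: fun_eq_iff field_simps)
      thus False using w by blast
    qed
    moreover have "a = a'"
    proof (rule ccontr)
      assume "a \<noteq> a'"
      hence "u = (\<lambda>i. 0)" using e \<open>b = b'\<close> by (auto simp: fun_eq_iff)
      thus False using u by blast
    qed
    ultimately show "p = p'" using p by simp
  qed
  have img: "range (\<lambda>p. (\<lambda>i. fst p * u i + snd p * w i)) = span2 u w"
  proof
    show "range (\<lambda>p. (\<lambda>i. fst p * u i + snd p * w i)) \<subseteq> span2 u w" by (auto simp: span2_def)
    show "span2 u w \<subseteq> range (\<lambda>p. (\<lambda>i. fst p * u i + snd p * w i))"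
    proof
      fix x assume "x \<in> span2 u w"
      then obtain a b where "x = (\<lambda>i. a * u i + b * w i)" by (auto simp: span2_def)
      thus "x \<in> range (\<lambda>p. (\<lambda>i. fst p * u i + snd p * w i))" by (intro range_eqI[of _ _ "(a, b)"]) simp
    qed
  qed
  show ?thesis using inj img by (simp add: bij_betw_def)
qed

lemma line_fiber_parity:
  fixes A B :: "(nat \<Rightarrow> 'k) \<Rightarrow> 'k"
  assumes l: "l \<in> Lines" and lA: "ladd A" and lB: "ladd B"
  shows "(\<Sum>v\<in>Vec. ((if A v = \<alpha>1 \<and> B v = \<beta>1 then 1 else 0) + (if A v = \<alpha>2 \<and> B v = \<beta>2 then 1 else 0))
            * (if v \<in> l then 1 else 0)) = (0::'k)"
proof -
  obtain u w where uw: "l = span2 u w" "u \<in> Vec" "w \<in> Vec" "u \<noteq> (\<lambda>i. 0)"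
    "\<forall>c. w \<noteq> (\<lambda>i. c * u i)" "bform u w = 0" using Lines_D[OF l] by blast
  define par where "par = (\<lambda>p::'k \<times> 'k. (\<lambda>i. fst p * u i + snd p * w i))"
  have bij: "bij_betw par UNIV l" using span2_bij[OF uw(4,5)] uw(1) par_def by simp
  have lVec: "l \<subseteq> Vec"
    using uw(1-3) by (auto simp: span2_def Vec_def)
  have cnt: "(\<Sum>v\<in>l. (if A v = \<alpha> \<and> B v = \<beta> then 1 else 0)) =
      (of_nat (card {p. A (par p) = \<alpha> \<and> B (par p) = \<beta>}) :: 'k)" for \<alpha> \<beta>
  proof -
    have "(\<Sum>v\<in>l. (if A v = \<alpha> \<and> B v = \<beta> then 1 else 0)) = (\<Sum>p\<in>UNIV. (if A (par p) = \<alpha> \<and> B (par p) = \<beta> then 1 else (0::'k)))"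
      using sum.reindex_bij_betw[OF bij, of "\<lambda>v. if A v = \<alpha> \<and> B v = \<beta> then 1 else (0::'k)"] by simp
    also have "\<dots> = of_nat (card {p. A (par p) = \<alpha> \<and> B (par p) = \<beta>})"
    proof -
      have fin2: "finite (UNIV :: ('k \<times> 'k) set)" by (metis UNIV_Times_UNIV finite_cartesian_product finK)
      show ?thesis using fin2 by (simp add: sum.If_cases Int_def)
    qed
    finally show ?thesis .
  qed
  have add': "ladd A \<Longrightarrow> (\<lambda>a b. A (par (a, b))) (a + a') (b + b') = (\<lambda>a b. A (par (a, b))) a b + (\<lambda>a b. A (par (a, b))) a' b'"
    for A :: "(nat \<Rightarrow> 'k) \<Rightarrow> 'k" and a b a' b'
    unfolding ladd_def par_def using uw(6) by simp
  have par_eq: "{p. A (par p) = \<alpha> \<and> B (par p) = \<beta>} =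
      {p. (\<lambda>a b. A (par (a, b))) (fst p) (snd p) = \<alpha> \<and> (\<lambda>a b. B (par (a, b))) (fst p) (snd p) = \<beta>}" for \<alpha> \<beta>
    by simp
  have eqc: "(of_nat (card {p. A (par p) = \<alpha>1 \<and> B (par p) = \<beta>1}) :: 'k) = of_nat (card {p. A (par p) = \<alpha>2 \<and> B (par p) = \<beta>2})"
    unfolding par_eq
    by (rule fiber_parity) (use add'[OF lA] add'[OF lB] in auto)
  have "(\<Sum>v\<in>Vec. ((if A v = \<alpha>1 \<and> B v = \<beta>1 then 1 else 0) + (if A v = \<alpha>2 \<and> B v = \<beta>2 then 1 else 0))
            * (if v \<in> l then 1 else (0::'k)))
      = (\<Sum>v\<in>l. ((if A v = \<alpha>1 \<and> B v = \<beta>1 then 1 else 0) + (if A v = \<alpha>2 \<and> B v = \<beta>2 then 1 else 0)))"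
    (is "(\<Sum>v\<in>Vec. ?F v * _) = _")
  proof -
    have "(\<Sum>v\<in>Vec. ?F v * (if v \<in> l then 1 else (0::'k))) = (\<Sum>v\<in>Vec. if v \<in> l then ?F v else 0)"
      by (rule sum.cong) auto
    also have "\<dots> = sum ?F (Vec \<inter> l)" using finite_Vec by (simp add: sum.inter_restrict)
    also have "\<dots> = sum ?F l" using lVec by (simp add: Int_absorb1)
    finally show ?thesis .
  qed
  also have "\<dots> = (of_nat (card {p. A (par p) = \<alpha>1 \<and> B (par p) = \<beta>1}) :: 'k) + of_nat (card {p. A (par p) = \<alpha>2 \<and> B (par p) = \<beta>2})"
    by (simp add: sum.distrib cnt)
  also have "\<dots> = 0" using eqc add_self by simp
  finally show ?thesis .
qed

end


lemma monv_zero3: "v 3 = 0 \<Longrightarrow> 0 < m 3 \<Longrightarrow> monv m v = (0::'k::field)"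
  unfolding monv_def by (rule prod_zero) (auto intro!: bexI[of _ 3])

lemma evalp_mult_x3:
  assumes "v 3 = 0" "q \<ge> 2"
  shows "evalp q (mult_x3 q h) v = evalp q h (v :: nat \<Rightarrow> 'k::field)"
proof -
  have "evalp q (mult_x3 q h) v = (\<Sum>m\<in>Mon q. h m * monv m v + (if q - 1 \<le> m 3 then h (m(3 := m 3 - (q - 1))) else 0) * monv m v)"
    by (simp add: evalp_monv mult_x3_def distrib_right)
  also have "\<dots> = (\<Sum>m\<in>Mon q. h m * monv m v)"
    by (rule sum.cong) (use assms monv_zero3[of v] in auto)
  finally show ?thesis by (simp add: evalp_monv)
qed

lemma evalp_sum_lines:
  "evalp q (\<lambda>m. \<Sum>l\<in>L. a l * d l m) v = (\<Sum>l\<in>L. a l * evalp q (d l) (v :: nat \<Rightarrow> 'k::field))"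
  unfolding evalp_def
  by (simp add: sum_distrib_right sum_distrib_left mult_ac) (rule sum.swap)

context ff begin

lemma dual_main:
  fixes r h :: "(nat \<Rightarrow> nat) \<Rightarrow> 'k" and A B :: "(nat \<Rightarrow> 'k) \<Rightarrow> 'k"
  assumes rC: "r = (\<lambda>m. \<Sum>l\<in>(Lines :: (nat \<Rightarrow> 'k) set set). a l * deltastar q l m)"
    and rker: "\<forall>v\<in>Vec. v 3 \<noteq> 0 \<longrightarrow> evalp q r v = 0"
    and fact: "r = mult_x3 q h"
    and lA: "ladd A" and lB: "ladd B"
  shows "(\<Sum>v\<in>{v\<in>Vec. v 3 = 0 \<and> A v = \<alpha>1 \<and> B v = \<beta>1}. evalp q h v)
       = (\<Sum>v\<in>{v\<in>Vec. v 3 = 0 \<and> A v = \<alpha>2 \<and> B v = \<beta>2}. evalp q h v)"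
proof -
  define \<phi> where "\<phi> = (\<lambda>v. (if A v = \<alpha>1 \<and> B v = \<beta>1 then 1 else 0) + (if A v = \<alpha>2 \<and> B v = \<beta>2 then 1 else (0::'k)))"
  have ev: "evalp q r v = (\<Sum>l\<in>Lines. a l * (if v \<in> l then 1 else 0))" if "v \<in> Vec" for v
    unfolding rC evalp_sum_lines using deltastar_prop that by simp
  have "(\<Sum>v\<in>Vec. \<phi> v * evalp q r v) = (\<Sum>v\<in>Vec. \<Sum>l\<in>Lines. a l * (\<phi> v * (if v \<in> l then 1 else 0)))"
    by (rule sum.cong) (auto simp: ev sum_distrib_left mult_ac)
  also have "\<dots> = (\<Sum>l\<in>Lines. a l * (\<Sum>v\<in>Vec. \<phi> v * (if v \<in> l then 1 else 0)))"
    by (subst sum.swap) (simp add: sum_distrib_left)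
  also have "\<dots> = 0"
    by (rule sum.neutral) (use line_fiber_parity[OF _ lA lB] in \<open>auto simp: \<phi>_def\<close>)
  finally have z: "(\<Sum>v\<in>Vec. \<phi> v * evalp q r v) = 0" .
  have S: "(\<Sum>v\<in>Vec. (if A v = \<alpha> \<and> B v = \<beta> then 1 else 0) * evalp q r v)
      = (\<Sum>v\<in>{v\<in>Vec. v 3 = 0 \<and> A v = \<alpha> \<and> B v = \<beta>}. evalp q h v)" for \<alpha> \<beta>
  proof -
    have "(\<Sum>v\<in>Vec. (if A v = \<alpha> \<and> B v = \<beta> then 1 else 0) * evalp q r v)
        = (\<Sum>v\<in>Vec. if v \<in> {v. v 3 = 0 \<and> A v = \<alpha> \<and> B v = \<beta>} then evalp q h v else 0)"
    proof (rule sum.cong)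
      fix v :: "nat \<Rightarrow> 'k" assume v: "v \<in> Vec"
      show "(if A v = \<alpha> \<and> B v = \<beta> then 1 else 0) * evalp q r v
          = (if v \<in> {v. v 3 = 0 \<and> A v = \<alpha> \<and> B v = \<beta>} then evalp q h v else 0)"
        using rker v evalp_mult_x3[of v q h] q_ge2 fact by auto
    qed simp
    also have "\<dots> = sum (evalp q h) (Vec \<inter> {v. v 3 = 0 \<and> A v = \<alpha> \<and> B v = \<beta>})"
      by (rule sum.inter_restrict[OF finite_Vec, symmetric])
    also have "Vec \<inter> {v. v 3 = 0 \<and> A v = \<alpha> \<and> B v = \<beta>} = {v\<in>Vec. v 3 = 0 \<and> A v = \<alpha> \<and> B v = \<beta>}" by auto
    finally show ?thesis .
  qed
  have "(\<Sum>v\<in>Vec. \<phi> v * evalp q r v) = (\<Sum>v\<in>{v\<in>Vec. v 3 = 0 \<and> A v = \<alpha>1 \<and> B v = \<beta>1}. evalp q h v)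
      + (\<Sum>v\<in>{v\<in>Vec. v 3 = 0 \<and> A v = \<alpha>2 \<and> B v = \<beta>2}. evalp q h v)"
    unfolding \<phi>_def S[symmetric] by (simp add: distrib_right sum.distrib)
  with z have "(\<Sum>v\<in>{v\<in>Vec. v 3 = 0 \<and> A v = \<alpha>1 \<and> B v = \<beta>1}. evalp q h v)
      + (\<Sum>v\<in>{v\<in>Vec. v 3 = 0 \<and> A v = \<alpha>2 \<and> B v = \<beta>2}. evalp q h v) = 0" by simp
  hence "- (\<Sum>v\<in>{v\<in>Vec. v 3 = 0 \<and> A v = \<alpha>1 \<and> B v = \<beta>1}. evalp q h v)
      = (\<Sum>v\<in>{v\<in>Vec. v 3 = 0 \<and> A v = \<alpha>2 \<and> B v = \<beta>2}. evalp q h v)" by (rule minus_unique)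
  thus ?thesis by (simp only: neg_eq)
qed

end


context ff begin

lemma two_mult[simp]: "2 * (x::'k) = 0" "(x::'k) * 2 = 0"
  using two_zero by simp_all

lemma K1:
  fixes p1 p2 w1 w2 v1 v2 \<beta> :: 'k
  assumes hw: "w1 * p1 + w2 * p2 = 1" and B: "p2 * v1 + p1 * v2 = \<beta>"
  shows "v1 = \<beta> * w2 + (w1 * v1 + w2 * v2) * p1" "v2 = \<beta> * w1 + (w1 * v1 + w2 * v2) * p2"
proof -
  have "\<beta> * w2 + (w1 * v1 + w2 * v2) * p1 = v1 * (w1 * p1 + w2 * p2) + 2 * (p1 * w2 * v2)"
    unfolding B[symmetric] by (simp add: algebra_simps)
  thus "v1 = \<beta> * w2 + (w1 * v1 + w2 * v2) * p1" using hw by simp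
  have "\<beta> * w1 + (w1 * v1 + w2 * v2) * p2 = v2 * (w1 * p1 + w2 * p2) + 2 * (p2 * w1 * v1)"
    unfolding B[symmetric] by (simp add: algebra_simps)
  thus "v2 = \<beta> * w1 + (w1 * v1 + w2 * v2) * p2" using hw by simp
qed

lemma K2:
  fixes p1 p2 w1 w2 y \<beta> :: 'k
  assumes hw: "w1 * p1 + w2 * p2 = 1"
  shows "p2 * (\<beta> * w2 + y * p1) + p1 * (\<beta> * w1 + y * p2) = \<beta>"
    "w1 * (\<beta> * w2 + y * p1) + w2 * (\<beta> * w1 + y * p2) = y"
proof -
  have "p2 * (\<beta> * w2 + y * p1) + p1 * (\<beta> * w1 + y * p2) = \<beta> * (w1 * p1 + w2 * p2) + 2 * (y * p1 * p2)"
    by (simp add: algebra_simps)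
  thus "p2 * (\<beta> * w2 + y * p1) + p1 * (\<beta> * w1 + y * p2) = \<beta>" using hw by simp
  have "w1 * (\<beta> * w2 + y * p1) + w2 * (\<beta> * w1 + y * p2) = y * (w1 * p1 + w2 * p2) + 2 * (\<beta> * w1 * w2)"
    by (simp add: algebra_simps)
  thus "w1 * (\<beta> * w2 + y * p1) + w2 * (\<beta> * w1 + y * p2) = y" using hw by simp
qed

lemma K4:
  fixes p1 p2 w1 w2 y \<beta> s :: 'k
  assumes hw: "w1 * p1 + w2 * p2 = 1" and hs: "s * s = p1 * p2"
  shows "(\<beta> * w2 + y * p1) * (\<beta> * w1 + y * p2) + (s * y)^2 = \<beta> * \<beta> * (w1 * w2) + \<beta> * y"
proof -
  have "(\<beta> * w2 + y * p1) * (\<beta> * w1 + y * p2) + (s * y)^2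
      = \<beta> * \<beta> * (w1 * w2) + \<beta> * y * (w1 * p1 + w2 * p2) + y * y * (p1 * p2 + s * s)"
    by (simp add: algebra_simps power2_eq_square)
  also have "p1 * p2 + s * s = 0" using hs add_self by simp
  finally show ?thesis using hw by simp
qed

lemma sqrt_exists: "\<exists>s::'k. s * s = x"
proof -
  have "inj (\<lambda>s::'k. s * s)"
  proof (rule injI)
    fix a b :: 'k assume "a * a = b * b"
    hence "(a + b) * (a + b) = 0"
      by (simp add: algebra_simps)
    hence "a + b = 0" by simp
    thus "a = b" using neg_eq by (metis minus_unique)
  qed
  hence "surj (\<lambda>s::'k. s * s)" using finite_UNIV_inj_surj[OF finK] by blast
  thus ?thesis by (metis surjD)
qed

lemma w_exists:
  assumes "p1 \<noteq> 0 \<or> p2 \<noteq> (0::'k)"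
  shows "\<exists>w1 w2. w1 * p1 + w2 * p2 = 1"
proof (cases "p1 = 0")
  case True thus ?thesis using assms by (intro exI[of _ 0] exI[of _ "1 / p2"]) simp
next
  case False thus ?thesis by (intro exI[of _ "1 / p1"] exI[of _ 0]) simp
qed

end


locale hctx = ff q t kk for q t and kk :: "'k::field itself" +
  fixes r h :: "(nat \<Rightarrow> nat) \<Rightarrow> 'k" and a :: "(nat \<Rightarrow> 'k) set \<Rightarrow> 'k"
  assumes rC: "r = (\<lambda>m. \<Sum>l\<in>(Lines :: (nat \<Rightarrow> 'k) set set). a l * deltastar q l m)"
    and rker: "\<forall>v\<in>Vec. v 3 \<noteq> 0 \<longrightarrow> evalp q r v = 0"
    and hRP: "h \<in> RPstar q"
    and h_no_x3: "\<forall>m. h m \<noteq> 0 \<longrightarrow> m 3 = 0"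
    and fact: "r = mult_x3 q h"
begin

abbreviation gg :: "'k \<Rightarrow> 'k \<Rightarrow> 'k \<Rightarrow> 'k" where
  "gg x0 x1 x2 \<equiv> evalp q h (vec4 x0 x1 x2 0)"

lemma add_eq0_iff: "(x::'k) + y = 0 \<longleftrightarrow> x = y"
  by (metis add_self minus_unique neg_eq)

lemma dual_sum:
  assumes "ladd A" "ladd B" "bij_betw P1 UNIV {v\<in>Vec. v 3 = 0 \<and> A v = \<alpha>1 \<and> B v = \<beta>1}"
    "bij_betw P2 UNIV {v\<in>Vec. v 3 = 0 \<and> A v = \<alpha>2 \<and> B v = \<beta>2}"
  shows "(\<Sum>y\<in>UNIV. evalp q h (P1 y)) = (\<Sum>y\<in>UNIV. evalp q h (P2 y))"
proof -
  have "(\<Sum>y\<in>UNIV. evalp q h (P1 y)) = (\<Sum>v\<in>{v\<in>Vec. v 3 = 0 \<and> A v = \<alpha>1 \<and> B v = \<beta>1}. evalp q h v)"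
    by (rule sum.reindex_bij_betw[OF assms(3)])
  also have "\<dots> = (\<Sum>v\<in>{v\<in>Vec. v 3 = 0 \<and> A v = \<alpha>2 \<and> B v = \<beta>2}. evalp q h v)"
    by (rule dual_main[OF rC rker fact assms(1,2)])
  also have "\<dots> = (\<Sum>y\<in>UNIV. evalp q h (P2 y))"
    by (rule sum.reindex_bij_betw[OF assms(4), symmetric])
  finally show ?thesis .
qed

lemma scale_inv:
  assumes "c \<noteq> 0"
  shows "evalp q h (\<lambda>i. c * v i) = evalp q h v"
proof -
  have hm: "h m * monv m (\<lambda>i. c * v i) = h m * monv m v" for m
  proof (cases "h m = 0")
    case False
    hence "(q - 1) dvd (\<Sum>i<4. m i)" using hRP by (auto simp: RPstar_def)
    then obtain k where k: "(\<Sum>i<4. m i) = (q - 1) * k" by blast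
    have "monv m (\<lambda>i. c * v i) = c ^ (\<Sum>i<4. m i) * monv m v"
      by (simp add: monv_def power_mult_distrib prod.distrib power_sum)
    also have "c ^ (\<Sum>i<4. m i) = 1" using k pow_q1[OF assms] by (simp add: power_mult)
    finally show ?thesis by simp
  qed simp
  show ?thesis unfolding evalp_monv by (rule sum.cong[OF refl]) (rule hm)
qed

lemma ofnat_q1: "(of_nat (q - 1) :: 'k) = 1"
  using q_ge2 ofnat_q neg_eq two_zero by (simp add: of_nat_diff)

lemma line_sum:
  shows "(\<Sum>y\<in>UNIV. gg (\<beta> * y) (y * p1) (y * p2)) = gg 0 0 0 + gg \<beta> p1 p2"
proof -
  let ?U = "UNIV - {0::'k}"
  have "(\<Sum>y\<in>UNIV. gg (\<beta> * y) (y * p1) (y * p2)) = (\<Sum>y\<in>insert 0 ?U. gg (\<beta> * y) (y * p1) (y * p2))"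
    by (simp add: insert_absorb)
  also have "\<dots> = gg 0 0 0 + (\<Sum>y\<in>?U. gg (\<beta> * y) (y * p1) (y * p2))"
    using finK by (subst sum.insert) auto
  also have "(\<Sum>y\<in>?U. gg (\<beta> * y) (y * p1) (y * p2)) = (\<Sum>y\<in>?U. gg \<beta> p1 p2)"
  proof (rule sum.cong)
    fix y assume "y \<in> ?U"
    hence y: "y \<noteq> 0" by simp
    have "vec4 (\<beta> * y) (y * p1) (y * p2) 0 = (\<lambda>i. y * vec4 \<beta> p1 p2 0 i)"
      by (auto simp: vec4_def fun_eq_iff)
    thus "gg (\<beta> * y) (y * p1) (y * p2) = gg \<beta> p1 p2" using scale_inv[OF y] by simp
  qed simp
  also have "\<dots> = gg \<beta> p1 p2"
    using cardK finK ofnat_q1 by (simp add: card_Diff_singleton)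
  finally show ?thesis .
qed

end


lemma addf_vec4: "addf \<kappa> c1 c2 m0 m1 m2 m3 (vec4 x0 x1 x2 x3) =
   \<kappa> * (x0 * x3 + x1 * x2) + (c1 * x1 + c2 * x2)^2 + (m0 * x0 + m1 * x1 + m2 * x2 + m3 * x3)"
  by (simp add: addf_def)

context hctx begin

lemma vec_in_fiber:
  assumes "v \<in> Vec" "v 3 = 0"
  shows "v = vec4 (v 0) (v 1) (v 2) 0"
  using Vec_vec4[OF assms(1)] assms(2) by simp

lemma fiberF2:
  fixes w1 w2 p1 p2 s b :: 'k
  assumes hw: "w1 * p1 + w2 * p2 = 1" and hs: "s * s = p1 * p2"
  shows "bij_betw (\<lambda>y. vec4 (b * y) (b * w2 + y * p1) (b * w1 + y * p2) 0) UNIV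
     {v\<in>Vec. v 3 = 0 \<and> addf 1 (s * w1) (s * w2) 1 0 0 0 v = b * b * (w1 * w2) \<and> addf 0 0 0 0 p2 p1 0 v = b}"
proof (rule bij_betw_byWitness[where f'="\<lambda>v. w1 * v 1 + w2 * v 2"])
  have cs: "s * w1 * x1 + s * w2 * x2 = s * (w1 * x1 + w2 * x2)" for x1 x2 :: 'k by (simp add: algebra_simps)
  show "\<forall>y\<in>UNIV. w1 * vec4 (b * y) (b * w2 + y * p1) (b * w1 + y * p2) 0 1 +
      w2 * vec4 (b * y) (b * w2 + y * p1) (b * w1 + y * p2) 0 2 = y"
    using K2(2)[OF hw] by simp
  show "(\<lambda>y. vec4 (b * y) (b * w2 + y * p1) (b * w1 + y * p2) 0) ` UNIV \<subseteq>
     {v\<in>Vec. v 3 = 0 \<and> addf 1 (s * w1) (s * w2) 1 0 0 0 v = b * b * (w1 * w2) \<and> addf 0 0 0 0 p2 p1 0 v = b}"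
  proof clarify
    fix y
    have e1: "w1 * (b * w2 + y * p1) + w2 * (b * w1 + y * p2) = y" using K2(2)[OF hw] by simp
    have e2: "p2 * (b * w2 + y * p1) + p1 * (b * w1 + y * p2) = b" using K2(1)[OF hw] by simp
    have e4: "(b * w2 + y * p1) * (b * w1 + y * p2) + (s * y)^2 = b * b * (w1 * w2) + b * y"
      using K4[OF hw hs] by simp
    have "addf 1 (s * w1) (s * w2) 1 0 0 0 (vec4 (b * y) (b * w2 + y * p1) (b * w1 + y * p2) 0)
       = ((b * w2 + y * p1) * (b * w1 + y * p2) + (s * y)^2) + b * y"
      unfolding addf_vec4 cs e1 by simp
    also have "\<dots> = b * b * (w1 * w2)" unfolding e4 by (simp add: add.assoc add_self)
    finally show "vec4 (b * y) (b * w2 + y * p1) (b * w1 + y * p2) 0 \<in> Vec \<and>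
       vec4 (b * y) (b * w2 + y * p1) (b * w1 + y * p2) 0 3 = 0 \<and>
       addf 1 (s * w1) (s * w2) 1 0 0 0 (vec4 (b * y) (b * w2 + y * p1) (b * w1 + y * p2) 0) = b * b * (w1 * w2) \<and>
       addf 0 0 0 0 p2 p1 0 (vec4 (b * y) (b * w2 + y * p1) (b * w1 + y * p2) 0) = b"
      using e2 by (simp add: addf_vec4)
  qed
  show "\<forall>v\<in>{v\<in>Vec. v 3 = 0 \<and> addf 1 (s * w1) (s * w2) 1 0 0 0 v = b * b * (w1 * w2) \<and> addf 0 0 0 0 p2 p1 0 v = b}.
     vec4 (b * (w1 * v 1 + w2 * v 2)) (b * w2 + (w1 * v 1 + w2 * v 2) * p1) (b * w1 + (w1 * v 1 + w2 * v 2) * p2) 0 = v"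
  proof
    fix v assume v: "v \<in> {v\<in>Vec. v 3 = 0 \<and> addf 1 (s * w1) (s * w2) 1 0 0 0 v = b * b * (w1 * w2) \<and> addf 0 0 0 0 p2 p1 0 v = b}"
    define y where "y = w1 * v 1 + w2 * v 2"
    have vv: "v = vec4 (v 0) (v 1) (v 2) 0" using v vec_in_fiber by auto
    have B: "p2 * v 1 + p1 * v 2 = b" using v by (simp add: addf_def)
    have v1: "v 1 = b * w2 + y * p1" and v2: "v 2 = b * w1 + y * p2" using K1[OF hw B] unfolding y_def by auto
    have A: "v 1 * v 2 + (s * y)^2 + v 0 = b * b * (w1 * w2)"
    proof -
      have "addf 1 (s * w1) (s * w2) 1 0 0 0 (vec4 (v 0) (v 1) (v 2) 0) = b * b * (w1 * w2)" using v vv by simp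
      thus ?thesis unfolding addf_vec4 cs y_def by simp
    qed
    have "v 1 * v 2 + (s * y)^2 = b * b * (w1 * w2) + b * y"
      unfolding v1 v2 using K4[OF hw hs] by simp
    hence "b * b * (w1 * w2) + b * y + v 0 = b * b * (w1 * w2)" using A by simp
    hence "b * y + v 0 = 0" by (simp add: add.assoc)
    hence v0: "v 0 = b * y" using add_eq0_iff by simp
    show "vec4 (b * (w1 * v 1 + w2 * v 2)) (b * w2 + (w1 * v 1 + w2 * v 2) * p1) (b * w1 + (w1 * v 1 + w2 * v 2) * p2) 0 = v"
      using vv v0 v1 v2 unfolding y_def[symmetric] by simp
  qed
qed simp

end


context hctx begin

lemma fiberF3:
  fixes w1 w2 p1 p2 b b' :: 'k
  assumes hw: "w1 * p1 + w2 * p2 = 1"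
  shows "bij_betw (\<lambda>y. vec4 (b * y) (b' * w2 + y * p1) (b' * w1 + y * p2) 0) UNIV
     {v\<in>Vec. v 3 = 0 \<and> addf 0 0 0 0 p2 p1 0 v = b' \<and> addf 0 0 0 1 (b * w1) (b * w2) 0 v = 0}"
proof (rule bij_betw_byWitness[where f'="\<lambda>v. w1 * v 1 + w2 * v 2"])
  show "\<forall>y\<in>UNIV. w1 * vec4 (b * y) (b' * w2 + y * p1) (b' * w1 + y * p2) 0 1 +
      w2 * vec4 (b * y) (b' * w2 + y * p1) (b' * w1 + y * p2) 0 2 = y"
    using K2(2)[OF hw] by simp
  show "(\<lambda>y. vec4 (b * y) (b' * w2 + y * p1) (b' * w1 + y * p2) 0) ` UNIV \<subseteq>
     {v\<in>Vec. v 3 = 0 \<and> addf 0 0 0 0 p2 p1 0 v = b' \<and> addf 0 0 0 1 (b * w1) (b * w2) 0 v = 0}"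
  proof clarify
    fix y
    have e1: "w1 * (b' * w2 + y * p1) + w2 * (b' * w1 + y * p2) = y" using K2(2)[OF hw] by simp
    have e2: "p2 * (b' * w2 + y * p1) + p1 * (b' * w1 + y * p2) = b'" using K2(1)[OF hw] by simp
    have e3: "b * y + b * w1 * (b' * w2 + y * p1) + b * w2 * (b' * w1 + y * p2) = b * y + b * (w1 * (b' * w2 + y * p1) + w2 * (b' * w1 + y * p2))"
      by (simp add: algebra_simps)
    show "vec4 (b * y) (b' * w2 + y * p1) (b' * w1 + y * p2) 0 \<in> Vec \<and>
       vec4 (b * y) (b' * w2 + y * p1) (b' * w1 + y * p2) 0 3 = 0 \<and>
       addf 0 0 0 0 p2 p1 0 (vec4 (b * y) (b' * w2 + y * p1) (b' * w1 + y * p2) 0) = b' \<and>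
       addf 0 0 0 1 (b * w1) (b * w2) 0 (vec4 (b * y) (b' * w2 + y * p1) (b' * w1 + y * p2) 0) = 0"
      using e2 e3 unfolding e1 by (simp add: addf_vec4 add_self)
  qed
  show "\<forall>v\<in>{v\<in>Vec. v 3 = 0 \<and> addf 0 0 0 0 p2 p1 0 v = b' \<and> addf 0 0 0 1 (b * w1) (b * w2) 0 v = 0}.
     vec4 (b * (w1 * v 1 + w2 * v 2)) (b' * w2 + (w1 * v 1 + w2 * v 2) * p1) (b' * w1 + (w1 * v 1 + w2 * v 2) * p2) 0 = v"
  proof
    fix v assume v: "v \<in> {v\<in>Vec. v 3 = 0 \<and> addf 0 0 0 0 p2 p1 0 v = b' \<and> addf 0 0 0 1 (b * w1) (b * w2) 0 v = 0}"
    define y where "y = w1 * v 1 + w2 * v 2"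
    have vv: "v = vec4 (v 0) (v 1) (v 2) 0" using v vec_in_fiber by auto
    have B: "p2 * v 1 + p1 * v 2 = b'" using v by (simp add: addf_def)
    have v1: "v 1 = b' * w2 + y * p1" and v2: "v 2 = b' * w1 + y * p2" using K1[OF hw B] unfolding y_def by auto
    have "v 0 + b * w1 * v 1 + b * w2 * v 2 = 0" using v by (simp add: addf_def)
    hence "v 0 + b * y = 0" unfolding y_def by (simp add: algebra_simps)
    hence v0: "v 0 = b * y" using add_eq0_iff by simp
    show "vec4 (b * (w1 * v 1 + w2 * v 2)) (b' * w2 + (w1 * v 1 + w2 * v 2) * p1) (b' * w1 + (w1 * v 1 + w2 * v 2) * p2) 0 = v"
      using vv v0 v1 v2 unfolding y_def[symmetric] by simp
  qed
qed simp

lemma x0_indep: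
  assumes p: "p1 \<noteq> 0 \<or> p2 \<noteq> 0"
  shows "gg \<beta> p1 p2 = gg 0 p1 p2"
proof -
  obtain w1 w2 where hw: "w1 * p1 + w2 * p2 = 1" using w_exists[OF p] by blast
  obtain s where hs: "s * s = p1 * p2" using sqrt_exists by blast
  have "(\<Sum>y\<in>UNIV. evalp q h (vec4 (0 * y) (0 * w2 + y * p1) (0 * w1 + y * p2) 0))
      = (\<Sum>y\<in>UNIV. evalp q h (vec4 (\<beta> * y) (\<beta> * w2 + y * p1) (\<beta> * w1 + y * p2) 0))"
    by (rule dual_sum[OF ladd_addf ladd_addf fiberF2[OF hw hs] fiberF2[OF hw hs]])
  also have "\<dots> = (\<Sum>y\<in>UNIV. evalp q h (vec4 (\<beta> * y) (0 * w2 + y * p1) (0 * w1 + y * p2) 0))"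
    by (rule dual_sum[OF ladd_addf ladd_addf fiberF3[OF hw] fiberF3[OF hw]])
  finally have "(\<Sum>y\<in>UNIV. gg (0 * y) (y * p1) (y * p2)) = (\<Sum>y\<in>UNIV. gg (\<beta> * y) (y * p1) (y * p2))"
    by simp
  thus ?thesis unfolding line_sum by simp
qed

end


lemma monv4: "monv m v = v 0 ^ m 0 * v 1 ^ m 1 * v 2 ^ m 2 * v 3 ^ m 3"
  by (simp add: monv_def eval_nat_numeral prod.lessThan_Suc mult_ac)

context hctx begin

lemma e0_case: "gg \<beta> 0 0 = gg 0 0 0"
proof -
  have fib: "bij_betw (\<lambda>y. vec4 y c 0 0) UNIV
      {v\<in>Vec. v 3 = 0 \<and> addf 0 0 0 0 1 0 0 v = c \<and> addf 0 0 0 0 0 1 0 v = 0}" for c :: 'k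
  proof (rule bij_betw_byWitness[where f'="\<lambda>v. v 0"])
    show "\<forall>v\<in>{v\<in>Vec. v 3 = 0 \<and> addf 0 0 0 0 1 0 0 v = c \<and> addf 0 0 0 0 0 1 0 v = 0}. vec4 (v 0) c 0 0 = v"
    proof
      fix v assume v: "v \<in> {v\<in>Vec. v 3 = 0 \<and> addf 0 0 0 0 1 0 0 v = c \<and> addf 0 0 0 0 0 1 0 v = 0}"
      hence "v = vec4 (v 0) (v 1) (v 2) 0" using vec_in_fiber by auto
      moreover have "v 1 = c" "v 2 = 0" using v by (simp_all add: addf_def)
      ultimately show "vec4 (v 0) c 0 0 = v" by simp
    qed
  qed (auto simp: addf_vec4)
  have "(\<Sum>y\<in>UNIV. evalp q h (vec4 y 0 0 0)) = (\<Sum>y\<in>UNIV. evalp q h (vec4 y 1 0 0))"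
    by (rule dual_sum[OF ladd_addf ladd_addf fib fib])
  also have "\<dots> = (\<Sum>y\<in>(UNIV::'k set). gg 0 1 0)" by (rule sum.cong) (auto intro: x0_indep)
  also have "\<dots> = 0" using cardK ofnat_q by simp
  finally have "(\<Sum>y\<in>UNIV. gg (1 * y) (y * 0) (y * 0)) = 0" by simp
  hence "gg 0 0 0 + gg 1 0 0 = 0" unfolding line_sum .
  hence one: "gg 1 0 0 = gg 0 0 0" using add_eq0_iff by simp
  show ?thesis
  proof (cases "\<beta> = 0")
    case False
    have "vec4 \<beta> 0 0 0 = (\<lambda>i. \<beta> * vec4 1 0 0 0 i)" by (auto simp: vec4_def fun_eq_iff)
    hence "gg \<beta> 0 0 = gg 1 0 0" using scale_inv[OF False] by simp
    thus ?thesis using one by simp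
  qed simp
qed

lemma g_indep: "gg x0 x1 x2 = gg 0 x1 x2"
proof (cases "x1 \<noteq> 0 \<or> x2 \<noteq> 0")
  case True thus ?thesis by (rule x0_indep)
next
  case False thus ?thesis using e0_case by simp
qed

lemma sum_cond: "(\<Sum>x1\<in>UNIV. \<Sum>x2\<in>UNIV. gg 0 x1 x2) = 0"
proof -
  have fib: "bij_betw (\<lambda>p. vec4 0 (fst p) (snd p) 0) UNIV
      {v\<in>Vec. v 3 = 0 \<and> addf 0 0 0 1 0 0 0 v = 0 \<and> addf 0 0 0 0 0 0 1 v = 0}"
  proof (rule bij_betw_byWitness[where f'="\<lambda>v. (v 1, v 2)"])
    show "\<forall>v\<in>{v\<in>Vec. v 3 = 0 \<and> addf 0 0 0 1 0 0 0 v = 0 \<and> addf 0 0 0 0 0 0 1 v = 0}.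
        vec4 0 (fst (v 1, v 2)) (snd (v 1, v 2)) 0 = v"
    proof
      fix v assume v: "v \<in> {v\<in>Vec. v 3 = 0 \<and> addf 0 0 0 1 0 0 0 v = 0 \<and> addf 0 0 0 0 0 0 1 v = 0}"
      hence "v = vec4 (v 0) (v 1) (v 2) 0" using vec_in_fiber by auto
      moreover have "v 0 = 0" using v by (simp add: addf_def)
      ultimately show "vec4 0 (fst (v 1, v 2)) (snd (v 1, v 2)) 0 = v" by simp
    qed
  qed (auto simp: addf_vec4)
  have empty: "{v\<in>Vec. v 3 = 0 \<and> addf 0 0 0 1 0 0 0 v = 0 \<and> addf 0 0 0 0 0 0 1 v = (1::'k)} = {}"
    by (auto simp: addf_def)
  have "(\<Sum>p\<in>UNIV. gg 0 (fst p) (snd p)) = (\<Sum>v\<in>{v\<in>Vec. v 3 = 0 \<and> addf 0 0 0 1 0 0 0 v = 0 \<and> addf 0 0 0 0 0 0 1 v = 0}. evalp q h v)"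
    by (rule sum.reindex_bij_betw[OF fib])
  also have "\<dots> = (\<Sum>v\<in>{v\<in>Vec. v 3 = 0 \<and> addf 0 0 0 1 0 0 0 v = 0 \<and> addf 0 0 0 0 0 0 1 v = (1::'k)}. evalp q h v)"
    by (rule dual_main[OF rC rker fact ladd_addf ladd_addf])
  also have "\<dots> = 0" unfolding empty by simp
  finally have "(\<Sum>p\<in>UNIV \<times> UNIV. gg 0 (fst p) (snd p)) = 0" by simp
  thus ?thesis unfolding sum_prod2 by simp
qed

end


context hctx begin

lemma h_red: "reduced q h" using hRP by (simp add: RPstar_def)

lemma h_x0: "h m \<noteq> 0 \<Longrightarrow> m 0 = 0"
proof -
  define h' where "h' = (\<lambda>m. if m 0 = 0 then h m else 0)"
  have red': "reduced q h'" using h_red by (auto simp: reduced_def h'_def)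
  have "\<forall>v\<in>Vec. evalp q h v = evalp q h' v"
  proof
    fix v :: "nat \<Rightarrow> 'k" assume v: "v \<in> Vec"
    have "evalp q h v = gg (v 0) (v 1) (v 2)"
    proof -
      have "h m * monv m v = h m * monv m (vec4 (v 0) (v 1) (v 2) 0)" for m
        using h_no_x3 by (cases "h m = 0") (auto simp: monv4)
      thus ?thesis unfolding evalp_monv by (intro sum.cong) auto
    qed
    also have "\<dots> = gg 0 (v 1) (v 2)" by (rule g_indep)
    also have "\<dots> = evalp q h' v"
    proof -
      have "h m * monv m (vec4 0 (v 1) (v 2) 0) = h' m * monv m v" for m
        using h_no_x3 by (cases "h m = 0"; cases "m 0 = 0") (auto simp: monv4 h'_def)
      thus ?thesis unfolding evalp_monv by (intro sum.cong) auto
    qed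
    finally show "evalp q h v = evalp q h' v" .
  qed
  hence "h = h'" using rep_unique[OF h_red red'] by blast
  thus "h m \<noteq> 0 \<Longrightarrow> m 0 = 0" by (metis h'_def)
qed

definition mQQ :: "nat \<Rightarrow> nat" where "mQQ = (\<lambda>i. if i = 1 \<or> i = 2 then q - 1 else 0)"

lemma ps_le: "e \<le> q - 1 \<Longrightarrow> ps e = (if e = q - 1 then 1 else 0)"
  using ps_small[of e] q_ge2 by auto

lemma h_QQ: "h mQQ = 0"
proof -
  have mQQ_Mon: "mQQ \<in> Mon q" using q_ge2 by (auto simp: Mon_def mQQ_def)
  have inner: "(\<Sum>x1\<in>UNIV. \<Sum>x2\<in>UNIV. monv m (vec4 0 x1 x2 (0::'k))) = 0 ^ m 0 * ps (m 1) * ps (m 2) * 0 ^ m 3" for m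
  proof -
    have "(\<Sum>x1\<in>UNIV. \<Sum>x2\<in>UNIV. monv m (vec4 0 x1 x2 (0::'k))) = (\<Sum>x1\<in>UNIV. \<Sum>x2\<in>UNIV. (0 ^ m 0 * 0 ^ m 3) * (x1 ^ m 1 * (x2 :: 'k) ^ m 2))"
      by (simp add: monv4 mult_ac)
    also have "\<dots> = (0 ^ m 0 * 0 ^ m 3) * ((\<Sum>x1\<in>UNIV. x1 ^ m 1) * (\<Sum>x2\<in>UNIV. (x2::'k) ^ m 2))"
      by (simp only: sum_distrib_left[symmetric] sum_distrib_right[symmetric])
    finally show ?thesis by (simp add: powsum' mult_ac)
  qed
  have W: "h m * (\<Sum>x1\<in>UNIV. \<Sum>x2\<in>UNIV. monv m (vec4 0 x1 x2 (0::'k))) = (if m = mQQ then h m else 0)"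
    if m: "m \<in> Mon q" for m
  proof (cases "m = mQQ")
    case True thus ?thesis using inner q_ge2 by (simp add: mQQ_def ps_le)
  next
    case False
    have "m 1 < q" "m 2 < q" using m unfolding Mon_def by auto
    hence bnd: "m 1 \<le> q - 1" "m 2 \<le> q - 1" by auto
    have "0 ^ m 0 * ps (m 1) * ps (m 2) * (0::'k) ^ m 3 = 0"
    proof (rule ccontr)
      assume "0 ^ m 0 * ps (m 1) * ps (m 2) * (0::'k) ^ m 3 \<noteq> 0"
      hence "m 0 = 0" "m 3 = 0" "m 1 = q - 1" "m 2 = q - 1"
        using bnd by (auto simp: ps_le split: if_splits)
      moreover have "\<forall>i\<ge>4. m i = 0" using m by (auto simp: Mon_def)
      ultimately have "m = mQQ"
      proof -
        assume a: "m 0 = 0" "m 3 = 0" "m 1 = q - 1" "m 2 = q - 1" "\<forall>i\<ge>4. m i = 0"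
        show "m = mQQ"
        proof
          fix i show "m i = mQQ i"
          proof (cases "i \<ge> 4")
            case True thus ?thesis using a by (simp add: mQQ_def)
          next
            case False
            hence "i = 0 \<or> i = 1 \<or> i = 2 \<or> i = 3" by arith
            thus ?thesis using a by (auto simp: mQQ_def)
          qed
        qed
      qed
      thus False using False by simp
    qed
    thus ?thesis using False inner by simp
  qed
  have "0 = (\<Sum>x1\<in>UNIV. \<Sum>x2\<in>UNIV. gg 0 x1 x2)" using sum_cond by simp
  also have "\<dots> = (\<Sum>m\<in>Mon q. h m * (\<Sum>x1\<in>UNIV. \<Sum>x2\<in>UNIV. monv m (vec4 0 x1 x2 (0::'k))))"
    unfolding evalp_monv sum_distrib_left by (simp only: sum.swap[of _ "Mon q"])
  also have "\<dots> = (\<Sum>m\<in>Mon q. if m = mQQ then h m else 0)" by (rule sum.cong) (use W in auto)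
  also have "\<dots> = h mQQ" using finite_Mon mQQ_Mon by simp
  finally show ?thesis by simp
qed

end


lemma binary_sum:
  "n < 2 ^ t \<Longrightarrow> (\<Sum>i<t. if odd (n div 2 ^ i) then (2::nat) ^ i else 0) = n"
proof (induction t arbitrary: n)
  case 0 thus ?case by simp
next
  case (Suc t)
  have "(\<Sum>i<Suc t. if odd (n div 2 ^ i) then (2::nat) ^ i else 0)
      = (if odd n then 1 else 0) + (\<Sum>i<t. if odd (n div 2 ^ Suc i) then 2 ^ Suc i else 0)"
    by (subst sum.lessThan_Suc_shift) simp
  also have "(\<Sum>i<t. if odd (n div 2 ^ Suc i) then (2::nat) ^ Suc i else 0)
      = 2 * (\<Sum>i<t. if odd (n div 2 div 2 ^ i) then 2 ^ i else 0)"
    by (simp add: sum_distrib_left div_mult2_eq if_distrib cong: if_cong)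
  also have "(\<Sum>i<t. if odd (n div 2 div 2 ^ i) then (2::nat) ^ i else 0) = n div 2"
    using Suc by simp
  finally show ?case by presburger
qed

lemma sum_pow2: "(\<Sum>i<t. (2::nat) ^ i) = 2 ^ t - 1"
  by (induction t) simp_all

context hctx begin

lemma final_support:
  assumes hm: "h m \<noteq> 0"
  shows "m \<in> insert (\<lambda>_. 0) (gmons t)"
proof -
  have mM: "m \<in> Mon q" using hm h_red by (auto simp: reduced_def)
  have m0: "m 0 = 0" using h_x0 hm by blast
  have m3: "m 3 = 0" using h_no_x3 hm by blast
  have mi: "\<forall>i\<ge>4. m i = 0" using mM by (auto simp: Mon_def)
  have b: "m 1 < q" "m 2 < q" using mM unfolding Mon_def by auto
  have "(q - 1) dvd (\<Sum>i<4. m i)" using hRP hm by (auto simp: RPstar_def)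
  moreover have "(\<Sum>i<4. m i) = m 1 + m 2" using m0 m3 by (simp add: eval_nat_numeral)
  ultimately obtain k where k: "m 1 + m 2 = (q - 1) * k" by auto
  have "m 1 + m 2 \<le> (q - 1) * 2" using b by arith
  hence "(q - 1) * k \<le> (q - 1) * 2" using k by simp
  hence "k \<le> 2" using q_ge2 by simp
  hence "k = 0 \<or> k = 1 \<or> k = 2" by auto
  moreover
  { assume "k = 0"
    hence "m 1 = 0" "m 2 = 0" using k by auto
    hence "m = (\<lambda>_. 0)"
    proof -
      assume a: "m 1 = 0" "m 2 = 0"
      show "m = (\<lambda>_. 0)"
      proof
        fix i show "m i = 0"
        proof (cases "i \<ge> 4")
          case True thus ?thesis using mi by simp
        next
          case False
          hence "i = 0 \<or> i = 1 \<or> i = 2 \<or> i = 3" by arith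
          thus ?thesis using a m0 m3 by auto
        qed
      qed
    qed
    hence ?thesis by simp }
  moreover
  { assume "k = 2"
    hence "m 1 = q - 1" "m 2 = q - 1" using k b by auto
    hence "m = mQQ"
    proof -
      assume a: "m 1 = q - 1" "m 2 = q - 1"
      show "m = mQQ"
      proof
        fix i show "m i = mQQ i"
        proof (cases "i \<ge> 4")
          case True thus ?thesis using mi by (simp add: mQQ_def)
        next
          case False
          hence "i = 0 \<or> i = 1 \<or> i = 2 \<or> i = 3" by arith
          thus ?thesis using a m0 m3 by (auto simp: mQQ_def)
        qed
      qed
    qed
    hence False using hm h_QQ by simp
    hence ?thesis by simp }
  moreover
  { assume "k = 1"
    hence m12: "m 1 + m 2 = q - 1" using k by simp
    define g where "g = (\<lambda>i. if odd (m 1 div 2 ^ i) then 1 else (2::nat))"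
    have g12: "\<forall>i<t. g i \<in> {1, 2}" by (simp add: g_def)
    have "gmon t g = m"
    proof
      fix j
      show "gmon t g j = m j"
      proof (cases "j = 1")
        case True
        have "gmon t g j = (\<Sum>i<t. if odd (m 1 div 2 ^ i) then 2 ^ i else 0)"
          unfolding gmon_def g_def True by (intro sum.cong) auto
        also have "\<dots> = m 1" using b qt by (intro binary_sum) simp
        finally show ?thesis using True by simp
      next
        case j1: False
        show ?thesis
        proof (cases "j = 2")
          case True
          have "gmon t g j = (\<Sum>i<t. if odd (m 1 div 2 ^ i) then 0 else 2 ^ i)"
            unfolding gmon_def g_def True by (intro sum.cong) auto
          moreover have "(\<Sum>i<t. if odd (m 1 div 2 ^ i) then 0 else (2::nat) ^ i)
              + (\<Sum>i<t. if odd (m 1 div 2 ^ i) then 2 ^ i else 0) = (\<Sum>i<t. 2 ^ i)"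
            by (simp add: sum.distrib[symmetric] if_distrib cong: if_cong)
          moreover have "(\<Sum>i<t. if odd (m 1 div 2 ^ i) then 2 ^ i else 0) = m 1"
            using b qt by (intro binary_sum) simp
          ultimately have "gmon t g j + m 1 = 2 ^ t - 1" using sum_pow2 by simp
          thus ?thesis using m12 qt True by simp
        next
          case False
          have "gmon t g j = 0" unfolding gmon_def g_def using j1 False by (intro sum.neutral) auto
          moreover have "m j = 0"
          proof (cases "j \<ge> 4")
            case True thus ?thesis using mi by simp
          next
            case c: False
            hence "j = 0 \<or> j = 3" using j1 False by arith
            thus ?thesis using m0 m3 by auto
          qed
          ultimately show ?thesis by simp
        qed
      qed
    qed
    hence "m \<in> gmons t" unfolding gmons_def using g12 by blast
    hence ?thesis by simp }
  ultimately show ?thesis by blast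
qed

end

theorem lemma11:
  fixes r h :: "(nat \<Rightarrow> nat) \<Rightarrow> 'k::field"
    and q t :: nat
  assumes card: "finite (UNIV :: 'k set)" "card (UNIV :: 'k set) = q" "q = 2 ^ t"
    and r_RP: "r \<in> RPstar q"
    and r_C: "\<exists>a :: (nat \<Rightarrow> 'k) set \<Rightarrow> 'k.
                r = (\<lambda>m. \<Sum>l\<in>(Lines :: (nat \<Rightarrow> 'k) set set). a l * deltastar q l m)"
    and r_ker: "\<forall>v\<in>Vec. v 3 \<noteq> 0 \<longrightarrow> evalp q r v = 0"
    and h_RP: "h \<in> RPstar q"
    and h_no_x3: "\<forall>m. h m \<noteq> 0 \<longrightarrow> m 3 = 0"
    and fact: "r = mult_x3 q h"
  shows "\<exists>b :: (nat \<Rightarrow> nat) \<Rightarrow> 'k.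
           \<forall>m. h m = (if m \<in> insert (\<lambda>_. 0) (gmons t) then b m else 0)"
proof -
  obtain a :: "(nat \<Rightarrow> 'k) set \<Rightarrow> 'k" where
    rC: "r = (\<lambda>m. \<Sum>l\<in>(Lines :: (nat \<Rightarrow> 'k) set set). a l * deltastar q l m)" using r_C by blast
  interpret H: hctx q t "TYPE('k)" r h a
    by unfold_locales (use card rC r_ker h_RP h_no_x3 fact in auto)
  show ?thesis
  proof (intro exI allI)
    fix m
    show "h m = (if m \<in> insert (\<lambda>_. 0) (gmons t) then h m else 0)"
      using H.final_support[of m] by auto
  qed
qed


end
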